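(* Let $d_1,d_2,e_1,e_2\ge2$ be integers, $d=d_1+d_2$, and let $A$ be the $d\times d_1e_1d_2e_2$ matrix whose columns are the vectors $i\,\mathbf{e}_\kappa\oplus j\,\mathbf{e}_\lambda\in\mathbb{N}^{d_1}\oplus\mathbb{N}^{d_2}$ for $(\kappa,i,\lambda,j)\in[d_1]\times[e_1]\times[d_2]\times[e_2]$. Then the $d$-dimensional polytope $\mathrm{conv}(A\cup0)$ has $d+4$ facets, given by the $d+2$ inequalities $$y_k\ge0\ (k\in[d]),\quad y_1+\dots+y_{d_1}\le e_1(y_{d_1+1}+\dots+y_{d_1+d_2}),\quad y_{d_1+1}+\dots+y_{d_1+d_2}\le e_2(y_1+\dots+y_{d_1}),$$ together with $y_1+\dots+y_{d_1}\le e_1$ and $y_{d_1+1}+\dots+y_{d_1+d_2}\le e_2$.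
   Context: $[m]=\{1,\dots,m\}$; $\mathbf{e}_\kappa,\mathbf{e}_\lambda$ are standard unit vectors; $\mathrm{conv}(A\cup 0)\subset\mathbb{R}^d$ is the convex hull of the columns of $A$ together with the origin. *)

theory Defs
  imports "HOL-Analysis.Analysis"
begin

text \<open>Coordinates of R^d, d = d1 + d2, are indexed by the sum type 'a + 'b with
  CARD('a) = d1 (first block, Inl) and CARD('b) = d2 (second block, Inr).\<close>

definition blockvec :: "'a \<Rightarrow> nat \<Rightarrow> 'b \<Rightarrow> nat \<Rightarrow> real ^ ('a::finite + 'b::finite)" where
  "blockvec \<kappa> i l j = (\<chi> k. case k of Inl a \<Rightarrow> (if a = \<kappa> then real i else 0)
                                       | Inr b \<Rightarrow> (if b = l then real j else 0))"

definition Acols :: "nat \<Rightarrow> nat \<Rightarrow> (real ^ ('a::finite + 'b::finite)) set" where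
  "Acols e1 e2 = {blockvec \<kappa> i l j | \<kappa> i l j. i \<in> {1..e1} \<and> j \<in> {1..e2}}"

definition PA :: "nat \<Rightarrow> nat \<Rightarrow> (real ^ ('a::finite + 'b::finite)) set" where
  "PA e1 e2 = convex hull (insert 0 (Acols e1 e2))"

definition one1 :: "real ^ ('a::finite + 'b::finite)" where
  "one1 = (\<chi> k. case k of Inl _ \<Rightarrow> 1 | Inr _ \<Rightarrow> 0)"

definition one2 :: "real ^ ('a::finite + 'b::finite)" where
  "one2 = (\<chi> k. case k of Inl _ \<Rightarrow> 0 | Inr _ \<Rightarrow> 1)"

text \<open>The d+4 inequalities, each as a pair (c, r) meaning  c \<bullet> y \<le> r.\<close>
definition ineqs :: "nat \<Rightarrow> nat \<Rightarrow> ((real ^ ('a::finite + 'b::finite)) \<times> real) set" where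
  "ineqs e1 e2 =
     {(- axis k 1, 0) | k. True}
     \<union> {(one1 - real e1 *\<^sub>R one2, 0),
        (one2 - real e2 *\<^sub>R one1, 0),
        (one1, real e1),
        (one2, real e2)}"

end

theory Submission
  imports Defs
begin

definition s1 :: "real ^ ('a::finite + 'b::finite) \<Rightarrow> real" where
  "s1 y = (\<Sum>a\<in>UNIV. y $ Inl a)"
definition s2 :: "real ^ ('a::finite + 'b::finite) \<Rightarrow> real" where
  "s2 y = (\<Sum>b\<in>UNIV. y $ Inr b)"
definition mk :: "('a \<Rightarrow> real) \<Rightarrow> ('b \<Rightarrow> real) \<Rightarrow> real ^ ('a::finite + 'b::finite)" where
  "mk f g = (\<chi> k. case k of Inl a \<Rightarrow> f a | Inr b \<Rightarrow> g b)"

lemma sum_UNIV_Plus: "(\<Sum>k\<in>(UNIV::('a::finite + 'b::finite) set). h k) = (\<Sum>a\<in>UNIV. h (Inl a)) + (\<Sum>b\<in>UNIV. h (Inr b))"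
  by (subst UNIV_Plus_UNIV[symmetric], subst sum.Plus) auto

lemma inner_one1: "one1 \<bullet> y = s1 y"
  unfolding inner_vec_def one1_def s1_def by (simp add: sum_UNIV_Plus)
lemma inner_one2: "one2 \<bullet> y = s2 y"
  unfolding inner_vec_def one2_def s2_def by (simp add: sum_UNIV_Plus)
lemma inner_axisn: "(- axis k 1) \<bullet> (y:: real^'n) = - y $ k"
  by (simp add: inner_axis')

lemma mk_nth [simp]: "mk f g $ Inl a = f a" "mk f g $ Inr b = g b"
  by (simp_all add: mk_def)
lemma s1_mk [simp]: "s1 (mk f g) = sum f UNIV" and s2_mk [simp]: "s2 (mk f g) = sum g UNIV"
  by (simp_all add: s1_def s2_def)

lemma sum_if_eq: "(\<Sum>a\<in>(UNIV::'a::finite set). if a = a0 then x else t) = x + (real CARD('a) - 1) * t"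
proof -
  have "(\<Sum>a\<in>(UNIV::'a set). if a = a0 then x else t) = x + (\<Sum>a\<in>UNIV - {a0}. t)"
    by (subst sum.remove[of _ a0]) auto
  also have "\<dots> = x + (real CARD('a) - 1) * t"
    by (simp add: card_Diff_singleton of_nat_diff)
  finally show ?thesis .
qed

lemma ineq_all: "(\<forall>(c, r)\<in>ineqs e1 e2. c \<bullet> y \<le> r) \<longleftrightarrow>
   (\<forall>k. 0 \<le> y $ k) \<and> s1 y \<le> real e1 * s2 y \<and> s2 y \<le> real e2 * s1 y \<and> s1 y \<le> real e1 \<and> s2 y \<le> real e2"
proof -
  have "(\<forall>p\<in>{(- axis k 1, 0::real) | k. True}. fst p \<bullet> y \<le> snd p) \<longleftrightarrow> (\<forall>k. 0 \<le> y $ k)"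
    by (auto simp: inner_axis')
  then show ?thesis
    unfolding ineqs_def by (auto simp: inner_one1 inner_one2 inner_diff_left split_def)
qed


definition L :: "'a \<Rightarrow> 'b \<Rightarrow> real \<Rightarrow> real \<Rightarrow> real ^ ('a::finite + 'b::finite)" where
  "L a b p q = mk (\<lambda>a'. if a' = a then p else 0) (\<lambda>b'. if b' = b then q else 0)"

lemma blockvec_L: "blockvec a i b j = L a b (real i) (real j)"
  by (simp add: blockvec_def L_def mk_def)

lemma L_00: "L a b 0 0 = 0"
  by (simp add: L_def mk_def vec_eq_iff split: sum.split)

lemma L_lin: "\<alpha> *\<^sub>R L a b p q + \<beta> *\<^sub>R L a b p' q' = L a b (\<alpha>*p + \<beta>*p') (\<alpha>*q + \<beta>*q')"
  by (simp add: L_def mk_def vec_eq_iff split: sum.split)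

lemma star_comb:
  fixes S :: "'v::real_vector set"
  assumes "convex S" "0 \<in> S" "x \<in> S" "y \<in> S" "\<alpha> \<ge> 0" "\<beta> \<ge> 0" "\<alpha> + \<beta> \<le> 1"
  shows "\<alpha> *\<^sub>R x + \<beta> *\<^sub>R y \<in> S"
proof (cases "\<alpha> + \<beta> = 0")
  case True
  then have "\<alpha> = 0" "\<beta> = 0" using assms by auto
  then show ?thesis using assms by simp
next
  case False
  define t where "t = \<alpha> + \<beta>"
  have t: "t > 0" "t \<le> 1" using False assms by (auto simp: t_def)
  have z: "(\<alpha>/t) *\<^sub>R x + (\<beta>/t) *\<^sub>R y \<in> S"
  proof -
    have "\<alpha>/t + \<beta>/t = 1" using t by (simp add: add_divide_distrib[symmetric] t_def)
    then show ?thesis using assms t by (intro convexD) auto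
  qed
  have "t *\<^sub>R ((\<alpha>/t) *\<^sub>R x + (\<beta>/t) *\<^sub>R y) + (1 - t) *\<^sub>R 0 \<in> S"
    by (rule convexD[OF assms(1) z assms(2)]) (use t in auto)
  then show ?thesis using t by (simp add: scaleR_add_right)
qed

lemma blockvec_in_PA: "i \<in> {1..e1} \<Longrightarrow> j \<in> {1..e2} \<Longrightarrow> blockvec a i b j \<in> PA e1 e2"
  unfolding PA_def Acols_def by (rule hull_inc) blast

lemma L_in_PA:
  assumes e: "e1 \<ge> 2" "e2 \<ge> 2"
    and pq: "p \<ge> 0" "q \<ge> 0" "p \<le> real e1 * q" "q \<le> real e2 * p" "p \<le> real e1" "q \<le> real e2"
  shows "L a b p q \<in> (PA e1 e2 :: (real ^ ('a::finite + 'b::finite)) set)"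
proof -
  have cv: "convex (PA e1 e2 :: (real ^ ('a + 'b)) set)" unfolding PA_def by simp
  have z: "(0::real ^ ('a + 'b)) \<in> PA e1 e2" unfolding PA_def by (rule hull_inc) simp
  have P1: "L a b (real e1) 1 \<in> PA e1 e2" using blockvec_in_PA[where i=e1 and j=1 and a=a and b=b] e
    by (simp add: blockvec_L)
  have P2: "L a b (real e1) (real e2) \<in> PA e1 e2" using blockvec_in_PA[where i=e1 and j=e2 and a=a and b=b] e
    by (simp add: blockvec_L)
  have P3: "L a b 1 (real e2) \<in> PA e1 e2" using blockvec_in_PA[where i=1 and j=e2 and a=a and b=b] e
    by (simp add: blockvec_L)
  have e1p: "real e1 \<ge> 2" "real e2 \<ge> 2" "real e1 - 1 > 0" "real e2 - 1 > 0" using e by auto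
  show ?thesis
  proof (cases "q * real e1 \<le> p * real e2")
    case True
    define \<beta> where "\<beta> = (q - p / e1) / (e2 - 1)"
    define \<alpha> where "\<alpha> = p / e1 - \<beta>"
    have b0: "\<beta> \<ge> 0" using pq e1p unfolding \<beta>_def
      by (intro divide_nonneg_pos) (auto simp: field_simps)
    have a0: "\<alpha> \<ge> 0" using True e1p unfolding \<alpha>_def \<beta>_def
      by (simp add: field_simps)
    have s: "\<alpha> + \<beta> \<le> 1" using pq e1p unfolding \<alpha>_def by (simp add: field_simps)
    have eq1: "\<alpha> * real e1 + \<beta> * real e1 = p" using e1p unfolding \<alpha>_def by (simp add: field_simps)
    have bb: "\<beta> * (real e2 - 1) = q - p / e1" using e1p unfolding \<beta>_def by simp
    have eq2: "\<alpha> * 1 + \<beta> * real e2 = q" using bb unfolding \<alpha>_def by (simp add: algebra_simps)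
    have "\<alpha> *\<^sub>R L a b (real e1) 1 + \<beta> *\<^sub>R L a b (real e1) (real e2) \<in> PA e1 e2"
      by (rule star_comb[OF cv z P1 P2 a0 b0 s])
    then show ?thesis by (simp only: L_lin eq1 eq2)
  next
    case False
    define \<beta> where "\<beta> = (p - q / e2) / (e1 - 1)"
    define \<alpha> where "\<alpha> = q / e2 - \<beta>"
    have b0: "\<beta> \<ge> 0" using pq e1p unfolding \<beta>_def
      by (intro divide_nonneg_pos) (auto simp: field_simps)
    have a0: "\<alpha> \<ge> 0" using False e1p unfolding \<alpha>_def \<beta>_def
      by (simp add: field_simps)
    have s: "\<alpha> + \<beta> \<le> 1" using pq e1p unfolding \<alpha>_def by (simp add: field_simps)
    have bb: "\<beta> * (real e1 - 1) = p - q / e2" using e1p unfolding \<beta>_def by simp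
    have eq1: "\<alpha> * 1 + \<beta> * real e1 = p" using bb unfolding \<alpha>_def by (simp add: algebra_simps)
    have eq2: "\<alpha> * real e2 + \<beta> * real e2 = q" using e1p unfolding \<alpha>_def by (simp add: field_simps)
    have "\<alpha> *\<^sub>R L a b 1 (real e2) + \<beta> *\<^sub>R L a b (real e1) (real e2) \<in> PA e1 e2"
      by (rule star_comb[OF cv z P3 P2 a0 b0 s])
    then show ?thesis by (simp only: L_lin eq1 eq2)
  qed
qed

lemma ineq_set_convex: "convex {y. \<forall>(c, r)\<in>ineqs e1 e2. c \<bullet> y \<le> r}"
proof -
  have eq: "{y. \<forall>(c, r)\<in>ineqs e1 e2. c \<bullet> y \<le> r} = (\<Inter>p\<in>ineqs e1 e2. {y. fst p \<bullet> y \<le> snd p})"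
    by (auto simp: split_def)
  show ?thesis by (simp only: eq) (intro convex_INT convex_halfspace_le)
qed

lemma Lsum_Inl: "(\<Sum>b\<in>UNIV. v b *\<^sub>R L a b p q) $ Inl a' = (\<Sum>b\<in>UNIV. v b) * (if a' = a then p else 0)"
  by (simp add: L_def sum_distrib_right)
lemma Lsum_Inr: "(\<Sum>b\<in>UNIV. v b *\<^sub>R L a b p q) $ Inr b' = v b' * q"
  by (simp add: L_def if_distrib cong: if_cong)

lemma decomp:
  fixes y :: "real ^ ('a::finite + 'b::finite)"
  assumes "s1 y > 0" "s2 y > 0"
  shows "y = (\<Sum>a\<in>UNIV. (y $ Inl a / s1 y) *\<^sub>R (\<Sum>b\<in>UNIV. (y $ Inr b / s2 y) *\<^sub>R L a b (s1 y) (s2 y)))"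
proof -
  have A: "(\<Sum>b\<in>UNIV. y $ Inr b / s2 y) = 1" using assms
    by (simp add: sum_divide_distrib[symmetric] s2_def)
  have B: "(\<Sum>a\<in>UNIV. y $ Inl a / s1 y) = 1" using assms
    by (simp add: sum_divide_distrib[symmetric] s1_def)
  show ?thesis
  proof (subst vec_eq_iff, intro allI)
    fix k show "y $ k = (\<Sum>a\<in>UNIV. (y $ Inl a / s1 y) *\<^sub>R (\<Sum>b\<in>UNIV. (y $ Inr b / s2 y) *\<^sub>R L a b (s1 y) (s2 y))) $ k"
    proof (cases k)
      case (Inl a')
      have "(\<Sum>a\<in>UNIV. (y $ Inl a / s1 y) *\<^sub>R (\<Sum>b\<in>UNIV. (y $ Inr b / s2 y) *\<^sub>R L a b (s1 y) (s2 y))) $ k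
        = (\<Sum>a\<in>UNIV. (y $ Inl a / s1 y) * ((\<Sum>b\<in>UNIV. (y $ Inr b / s2 y) *\<^sub>R L a b (s1 y) (s2 y)) $ Inl a'))"
        by (simp only: Inl sum_component vector_scaleR_component real_scaleR_def)
      also have "\<dots> = (\<Sum>a\<in>UNIV. (y $ Inl a / s1 y) * (1 * (if a' = a then s1 y else 0)))"
        by (simp only: Lsum_Inl A)
      also have "\<dots> = y $ k" using assms by (simp add: Inl if_distrib cong: if_cong)
      finally show ?thesis by simp
    next
      case (Inr b')
      have "(\<Sum>a\<in>UNIV. (y $ Inl a / s1 y) *\<^sub>R (\<Sum>b\<in>UNIV. (y $ Inr b / s2 y) *\<^sub>R L a b (s1 y) (s2 y))) $ k
        = (\<Sum>a\<in>UNIV. (y $ Inl a / s1 y) * ((\<Sum>b\<in>UNIV. (y $ Inr b / s2 y) *\<^sub>R L a b (s1 y) (s2 y)) $ Inr b'))"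
        by (simp only: Inr sum_component vector_scaleR_component real_scaleR_def)
      also have "\<dots> = (\<Sum>a\<in>UNIV. (y $ Inl a / s1 y)) * (y $ Inr b' / s2 y * s2 y)"
        by (simp only: Lsum_Inr sum_distrib_right)
      also have "\<dots> = y $ k" using assms by (simp add: B Inr)
      finally show ?thesis by simp
    qed
  qed
qed

lemma s_nonneg: "\<forall>k. 0 \<le> y $ k \<Longrightarrow> s1 y \<ge> 0 \<and> s2 y \<ge> 0"
  by (auto simp: s1_def s2_def intro: sum_nonneg)

lemma PA_eq:
  assumes e: "e1 \<ge> 2" "e2 \<ge> 2"
  shows "(PA e1 e2 :: (real ^ ('a::finite + 'b::finite)) set) = {y. \<forall>(c, r)\<in>ineqs e1 e2. c \<bullet> y \<le> r}"
proof
  have sub: "insert 0 (Acols e1 e2) \<subseteq> {y :: real ^ ('a + 'b). \<forall>(c, r)\<in>ineqs e1 e2. c \<bullet> y \<le> r}"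
  proof
    fix x :: "real ^ ('a + 'b)" assume "x \<in> insert 0 (Acols e1 e2)"
    then have "x = 0 \<or> (\<exists>\<kappa> i l j. x = blockvec \<kappa> i l j \<and> i \<in> {1..e1} \<and> j \<in> {1..e2})"
      unfolding Acols_def by simp
    then consider "x = 0" | \<kappa> i l j where "x = blockvec \<kappa> i l j" "i \<in> {1..e1}" "j \<in> {1..e2}"
      by metis
    then show "x \<in> {y. \<forall>(c, r)\<in>ineqs e1 e2. c \<bullet> y \<le> r}"
    proof cases
      case 1 then show ?thesis by (simp add: ineq_all s1_def s2_def)
    next
      case 2
      have r: "real i \<le> real e1" "real j \<le> real e2" "real i \<ge> 1" "real j \<ge> 1" using 2(2,3) by auto
      have m: "real e1 * 1 \<le> real e1 * real j" "real e2 * 1 \<le> real e2 * real i"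
        using r by (intro mult_left_mono; simp)+
      have s: "s1 x = real i" "s2 x = real j" unfolding 2(1) by (simp_all add: blockvec_L L_def)
      have nn: "\<forall>k. 0 \<le> x $ k" unfolding 2(1) by (simp add: blockvec_L L_def mk_def split: sum.split)
      have "(\<forall>k. 0 \<le> x $ k) \<and> s1 x \<le> real e1 * s2 x \<and> s2 x \<le> real e2 * s1 x \<and> s1 x \<le> real e1 \<and> s2 x \<le> real e2"
      proof -
        have "real i \<le> real e1 * real j" "real j \<le> real e2 * real i" using r m by linarith+
        then show ?thesis unfolding s using nn r by simp
      qed
      then show ?thesis by (simp only: ineq_all mem_Collect_eq simp_thms)
    qed
  qed
  show "PA e1 e2 \<subseteq> {y :: real ^ ('a + 'b). \<forall>(c, r)\<in>ineqs e1 e2. c \<bullet> y \<le> r}"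
    unfolding PA_def by (rule hull_minimal[OF sub]) (rule ineq_set_convex)
next
  show "{y. \<forall>(c, r)\<in>ineqs e1 e2. c \<bullet> y \<le> r} \<subseteq> (PA e1 e2 :: (real ^ ('a + 'b)) set)"
  proof
    fix y :: "real ^ ('a + 'b)"
    assume "y \<in> {y. \<forall>(c, r)\<in>ineqs e1 e2. c \<bullet> y \<le> r}"
    then have H: "\<forall>k. 0 \<le> y $ k" "s1 y \<le> real e1 * s2 y" "s2 y \<le> real e2 * s1 y" "s1 y \<le> real e1" "s2 y \<le> real e2"
      by (auto simp: ineq_all)
    have cv: "convex (PA e1 e2 :: (real ^ ('a + 'b)) set)" unfolding PA_def by simp
    show "y \<in> PA e1 e2"
    proof (cases "s1 y = 0")
      case True
      then have "s2 y \<le> 0" using H by simp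
      then have "s2 y = 0" using s_nonneg[OF H(1)] by simp
      then have "y = 0" using True H(1)
        by (auto simp: s1_def s2_def vec_eq_iff sum_nonneg_eq_0_iff) (metis sum.exhaust)
      then show ?thesis unfolding PA_def by (simp add: hull_inc)
    next
      case False
      then have p1: "s1 y > 0" using s_nonneg[OF H(1)] by simp
      then have "0 < real e1 * s2 y" using H(2) by linarith
      then have p2: "s2 y > 0" by (rule zero_less_mult_pos) (use e in simp)
      have "(\<Sum>a\<in>UNIV. (y $ Inl a / s1 y) *\<^sub>R (\<Sum>b\<in>UNIV. (y $ Inr b / s2 y) *\<^sub>R L a b (s1 y) (s2 y))) \<in> PA e1 e2"
      proof (rule convex_sum[OF _ cv])
        show "(\<Sum>a\<in>UNIV. y $ Inl a / s1 y) = 1" using p1 by (simp add: sum_divide_distrib[symmetric] s1_def)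
        show "\<And>a. 0 \<le> y $ Inl a / s1 y" using p1 H(1) by simp
        fix a :: 'a
        show "(\<Sum>b\<in>UNIV. (y $ Inr b / s2 y) *\<^sub>R L a b (s1 y) (s2 y)) \<in> PA e1 e2"
        proof (rule convex_sum[OF _ cv])
          show "(\<Sum>b\<in>UNIV. y $ Inr b / s2 y) = 1" using p2 by (simp add: sum_divide_distrib[symmetric] s2_def)
          show "\<And>b. 0 \<le> y $ Inr b / s2 y" using p2 H(1) by simp
          show "L a b (s1 y) (s2 y) \<in> PA e1 e2" for b
            by (rule L_in_PA[OF e]) (use p1 p2 H(2-5) in auto)
        qed simp
      qed simp
      then show ?thesis using decomp[OF p1 p2] by simp
    qed
  qed
qed

lemma zero_in_PA: "0 \<in> PA e1 e2"
  unfolding PA_def by (rule hull_inc) simp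

lemma aff_dim_PA:
  assumes e: "e1 \<ge> 2" "e2 \<ge> 2"
  shows "aff_dim (PA e1 e2 :: (real ^ ('a::finite + 'b::finite)) set) = int (CARD('a) + CARD('b))"
proof -
  let ?S = "PA e1 e2 :: (real ^ ('a + 'b)) set"
  have ax: "axis k 1 \<in> span ?S" for k
  proof (cases k)
    case (Inl a)
    have "blockvec a 2 (undefined::'b) 1 - blockvec a 1 undefined 1 = axis k 1"
      by (simp add: Inl blockvec_def axis_def vec_eq_iff split: sum.split)
    moreover have "blockvec a 2 (undefined::'b) 1 \<in> ?S" "blockvec a 1 (undefined::'b) 1 \<in> ?S"
      using e by (auto intro: blockvec_in_PA)
    ultimately show ?thesis by (metis span_base span_diff)
  next
    case (Inr b)
    have "blockvec (undefined::'a) 1 b 2 - blockvec undefined 1 b 1 = axis k 1"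
      by (simp add: Inr blockvec_def axis_def vec_eq_iff split: sum.split)
    moreover have "blockvec (undefined::'a) 1 b 2 \<in> ?S" "blockvec (undefined::'a) 1 b 1 \<in> ?S"
      using e by (auto intro: blockvec_in_PA)
    ultimately show ?thesis by (metis span_base span_diff)
  qed
  have "Basis \<subseteq> span ?S" using ax by (auto simp: Basis_vec_def)
  then have "span ?S = UNIV"
    by (metis span_Basis span_mono span_span top.extremum_uniqueI)
  moreover have "affine hull ?S = span ?S"
    by (rule affine_hull_span_0) (simp add: hull_inc zero_in_PA)
  ultimately have "affine hull ?S = UNIV" by simp
  then have "aff_dim ?S = aff_dim (UNIV :: (real ^ ('a + 'b)) set)"
    by (metis aff_dim_affine_hull)
  then show ?thesis by simp
qed

lemma ineqs_eq: "ineqs e1 e2 = range (\<lambda>k. (- axis k 1, 0)) \<union>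
   {(one1 - real e1 *\<^sub>R one2, 0), (one2 - real e2 *\<^sub>R one1, 0), (one1, real e1), (one2, real e2)}"
  unfolding ineqs_def by auto

lemma card_ineqs:
  assumes e: "e1 \<ge> 2" "e2 \<ge> 2"
  shows "card (ineqs e1 e2 :: ((real ^ ('a::finite + 'b::finite)) \<times> real) set) = CARD('a) + CARD('b) + 4"
proof -
  let ?A = "(one1 - real e1 *\<^sub>R one2, 0) :: (real ^ ('a + 'b)) \<times> real"
  let ?B = "(one2 - real e2 *\<^sub>R one1, 0) :: (real ^ ('a + 'b)) \<times> real"
  let ?C = "(one1, real e1) :: (real ^ ('a + 'b)) \<times> real"
  let ?D = "(one2, real e2) :: (real ^ ('a + 'b)) \<times> real"
  let ?X = "\<lambda>k. (- axis k 1, 0) :: (real ^ ('a + 'b)) \<times> real"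
  define a :: 'a where "a = undefined"
  define b :: 'b where "b = undefined"
  have nb: "fst p $ k \<noteq> fst q $ k \<Longrightarrow> p \<noteq> q" for p q :: "(real ^ ('a + 'b)) \<times> real" and k by auto
  have d: "?A \<noteq> ?B" "?C \<noteq> ?D"
    by (rule nb[where k="Inl a"], use e in \<open>simp add: one1_def one2_def\<close>)+
  have d2: "?A \<noteq> ?C" "?A \<noteq> ?D" "?B \<noteq> ?C" "?B \<noteq> ?D" using e by auto
  have dx: "?X k \<noteq> ?A" "?X k \<noteq> ?B" "?X k \<noteq> ?C" "?X k \<noteq> ?D" for k
  proof -
    show "?X k \<noteq> ?A" by (rule nb[where k="Inl a"]) (simp add: one1_def one2_def axis_def)
    show "?X k \<noteq> ?B" by (rule nb[where k="Inr b"]) (simp add: one1_def one2_def axis_def)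
    show "?X k \<noteq> ?C" "?X k \<noteq> ?D" using e by auto
  qed
  have inj: "inj ?X" by (rule injI) (simp add: axis_eq_axis)
  have "card (range ?X) = CARD('a + 'b)" using inj by (simp add: card_image)
  moreover have "card {?A, ?B, ?C, ?D} = 4" using d d2 by simp
  moreover have "range ?X \<inter> {?A, ?B, ?C, ?D} = {}"
  proof -
    have "\<forall>x\<in>range ?X. x \<notin> {?A, ?B, ?C, ?D}"
    proof (rule ballI, elim rangeE)
      fix x k assume "x = ?X k"
      then show "x \<notin> {?A, ?B, ?C, ?D}" using dx[of k] by (metis insert_iff empty_iff)
    qed
    then show ?thesis by blast
  qed
  ultimately show ?thesis unfolding ineqs_eq
    by (subst card_Un_disjoint) auto
qed

lemma ineqs_cases:
  assumes "p \<in> ineqs e1 e2"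
  obtains a where "p = (- axis (Inl a) 1, 0)" | b where "p = (- axis (Inr b) 1, 0)"
    | "p = (one1 - real e1 *\<^sub>R one2, 0)" | "p = (one2 - real e2 *\<^sub>R one1, 0)"
    | "p = (one1, real e1)" | "p = (one2, real e2)"
proof -
  have "(\<exists>k. p = (- axis k 1, 0)) \<or> p = (one1 - real e1 *\<^sub>R one2, 0) \<or> p = (one2 - real e2 *\<^sub>R one1, 0)
     \<or> p = (one1, real e1) \<or> p = (one2, real e2)"
    using assms unfolding ineqs_def by blast
  then show ?thesis
  proof (elim disjE exE)
    fix k assume k: "p = (- axis k 1, 0)"
    show ?thesis
    proof (cases k)
      case (Inl a) then show ?thesis using k that(1) by blast
    next
      case (Inr b) then show ?thesis using k that(2) by blast
    qed
  qed (use that in blast)+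
qed

lemma others_lt:
  assumes A: "\<forall>k. (- axis k 1, 0) \<noteq> p \<longrightarrow> 0 < z $ k"
    "(one1 - real e1 *\<^sub>R one2, 0) \<noteq> p \<longrightarrow> s1 z < real e1 * s2 z"
    "(one2 - real e2 *\<^sub>R one1, 0) \<noteq> p \<longrightarrow> s2 z < real e2 * s1 z"
    "(one1, real e1) \<noteq> p \<longrightarrow> s1 z < real e1"
    "(one2, real e2) \<noteq> p \<longrightarrow> s2 z < real e2"
  shows "\<forall>q\<in>ineqs e1 e2. q \<noteq> p \<longrightarrow> fst q \<bullet> z < snd q"
proof (intro ballI impI)
  fix q assume q: "q \<in> ineqs e1 e2" "q \<noteq> p"
  from q(1) show "fst q \<bullet> z < snd q"
  proof (cases rule: ineqs_cases)
    case (1 a)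
    have "0 < z $ Inl a" using A(1) q(2) 1 by blast
    then show ?thesis using 1 by (simp add: inner_axis')
  next
    case (2 b)
    have "0 < z $ Inr b" using A(1) q(2) 2 by blast
    then show ?thesis using 2 by (simp add: inner_axis')
  next
    case 3 then show ?thesis using A(2) q(2) by (simp add: inner_one1 inner_one2 inner_diff_left)
  next
    case 4 then show ?thesis using A(3) q(2) by (simp add: inner_one1 inner_one2 inner_diff_left)
  next
    case 5 then show ?thesis using A(4) q(2) by (simp add: inner_one1)
  next
    case 6 then show ?thesis using A(5) q(2) by (simp add: inner_one2)
  qed
qed

lemma others_le:
  assumes A: "\<forall>k. (- axis k 1, 0) \<noteq> p \<longrightarrow> 0 \<le> z $ k"
    "(one1 - real e1 *\<^sub>R one2, 0) \<noteq> p \<longrightarrow> s1 z \<le> real e1 * s2 z"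
    "(one2 - real e2 *\<^sub>R one1, 0) \<noteq> p \<longrightarrow> s2 z \<le> real e2 * s1 z"
    "(one1, real e1) \<noteq> p \<longrightarrow> s1 z \<le> real e1"
    "(one2, real e2) \<noteq> p \<longrightarrow> s2 z \<le> real e2"
  shows "\<forall>q\<in>ineqs e1 e2. q \<noteq> p \<longrightarrow> fst q \<bullet> z \<le> snd q"
proof (intro ballI impI)
  fix q assume q: "q \<in> ineqs e1 e2" "q \<noteq> p"
  from q(1) show "fst q \<bullet> z \<le> snd q"
  proof (cases rule: ineqs_cases)
    case (1 a)
    have "0 \<le> z $ Inl a" using A(1) q(2) 1 by blast
    then show ?thesis using 1 by (simp add: inner_axis')
  next
    case (2 b)
    have "0 \<le> z $ Inr b" using A(1) q(2) 2 by blast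
    then show ?thesis using 2 by (simp add: inner_axis')
  next
    case 3 then show ?thesis using A(2) q(2) by (simp add: inner_one1 inner_one2 inner_diff_left)
  next
    case 4 then show ?thesis using A(3) q(2) by (simp add: inner_one1 inner_one2 inner_diff_left)
  next
    case 5 then show ?thesis using A(4) q(2) by (simp add: inner_one1)
  next
    case 6 then show ?thesis using A(5) q(2) by (simp add: inner_one2)
  qed
qed

lemma tight_exists:
  assumes e: "e1 \<ge> 2" "e2 \<ge> 2" and c: "CARD('a::finite) \<ge> 2" "CARD('b::finite) \<ge> 2"
    and p: "p \<in> ineqs e1 e2"
  shows "\<exists>z :: real ^ ('a + 'b). fst p \<bullet> z = snd p \<and> (\<forall>q\<in>ineqs e1 e2. q \<noteq> p \<longrightarrow> fst q \<bullet> z < snd q)"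
proof -
  define n1 where "n1 = real CARD('a)"
  define n2 where "n2 = real CARD('b)"
  have n: "n1 \<ge> 2" "n2 \<ge> 2" using c by (auto simp: n1_def n2_def)
  have ee: "real e1 \<ge> 2" "real e2 \<ge> 2" using e by auto
  have ee2: "real e1 * real e2 \<ge> 4" using mult_mono[OF ee] by simp
  from p show ?thesis
  proof (cases rule: ineqs_cases)
    case (1 a0)
    define z :: "real ^ ('a + 'b)" where "z = mk (\<lambda>a. if a = a0 then 0 else 1 / (n1 - 1)) (\<lambda>b. 1 / n2)"
    have s: "s1 z = 1" "s2 z = 1" using n unfolding z_def by (simp_all add: sum_if_eq n1_def[symmetric] n2_def[symmetric])
    have "fst p \<bullet> z = snd p" using 1 by (simp add: inner_axis' z_def)
    moreover have "\<forall>q\<in>ineqs e1 e2. q \<noteq> p \<longrightarrow> fst q \<bullet> z < snd q"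
    proof (rule others_lt)
      show "\<forall>k. (- axis k 1, 0) \<noteq> p \<longrightarrow> 0 < z $ k" using 1 n
        by (auto simp: z_def mk_def axis_eq_axis split: sum.split)
    qed (use ee ee2 1 in \<open>auto simp: s algebra_simps\<close>)
    ultimately show ?thesis by blast
  next
    case (2 b0)
    define z :: "real ^ ('a + 'b)" where "z = mk (\<lambda>a. 1 / n1) (\<lambda>b. if b = b0 then 0 else 1 / (n2 - 1))"
    have s: "s1 z = 1" "s2 z = 1" using n unfolding z_def by (simp_all add: sum_if_eq n1_def[symmetric] n2_def[symmetric])
    have "fst p \<bullet> z = snd p" using 2 by (simp add: inner_axis' z_def)
    moreover have "\<forall>q\<in>ineqs e1 e2. q \<noteq> p \<longrightarrow> fst q \<bullet> z < snd q"
    proof (rule others_lt)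
      show "\<forall>k. (- axis k 1, 0) \<noteq> p \<longrightarrow> 0 < z $ k" using 2 n
        by (auto simp: z_def mk_def axis_eq_axis split: sum.split)
    qed (use ee ee2 2 in \<open>auto simp: s algebra_simps\<close>)
    ultimately show ?thesis by blast
  next
    case 3
    define z :: "real ^ ('a + 'b)" where "z = mk (\<lambda>a. real e1 / (2 * n1)) (\<lambda>b. 1 / (2 * n2))"
    have s: "s1 z = real e1 / 2" "s2 z = 1 / 2" using n unfolding z_def by (simp_all add: n1_def[symmetric] n2_def[symmetric])
    have "fst p \<bullet> z = snd p" using 3 by (simp add: s inner_one1 inner_one2 inner_diff_left)
    moreover have "\<forall>q\<in>ineqs e1 e2. q \<noteq> p \<longrightarrow> fst q \<bullet> z < snd q"
    proof (rule others_lt)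
      show "\<forall>k. (- axis k 1, 0) \<noteq> p \<longrightarrow> 0 < z $ k" using n ee
        by (auto simp: z_def mk_def axis_eq_axis split: sum.split)
    qed (use ee ee2 3 in \<open>auto simp: s algebra_simps\<close>)
    ultimately show ?thesis by blast
  next
    case 4
    define z :: "real ^ ('a + 'b)" where "z = mk (\<lambda>a. 1 / (2 * n1)) (\<lambda>b. real e2 / (2 * n2))"
    have s: "s1 z = 1 / 2" "s2 z = real e2 / 2" using n unfolding z_def by (simp_all add: n1_def[symmetric] n2_def[symmetric])
    have "fst p \<bullet> z = snd p" using 4 by (simp add: s inner_one1 inner_one2 inner_diff_left)
    moreover have "\<forall>q\<in>ineqs e1 e2. q \<noteq> p \<longrightarrow> fst q \<bullet> z < snd q"
    proof (rule others_lt)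
      show "\<forall>k. (- axis k 1, 0) \<noteq> p \<longrightarrow> 0 < z $ k" using n ee
        by (auto simp: z_def mk_def axis_eq_axis split: sum.split)
    qed (use ee ee2 4 in \<open>auto simp: s algebra_simps\<close>)
    ultimately show ?thesis by blast
  next
    case 5
    define z :: "real ^ ('a + 'b)" where "z = mk (\<lambda>a. real e1 / n1) (\<lambda>b. 3 / (2 * n2))"
    have s: "s1 z = real e1" "s2 z = 3 / 2" using n unfolding z_def by (simp_all add: n1_def[symmetric] n2_def[symmetric])
    have "fst p \<bullet> z = snd p" using 5 s by (simp add: inner_one1)
    moreover have "\<forall>q\<in>ineqs e1 e2. q \<noteq> p \<longrightarrow> fst q \<bullet> z < snd q"
    proof (rule others_lt)
      show "\<forall>k. (- axis k 1, 0) \<noteq> p \<longrightarrow> 0 < z $ k" using n ee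
        by (auto simp: z_def mk_def axis_eq_axis split: sum.split)
    qed (use ee ee2 5 in \<open>auto simp: s algebra_simps\<close>)
    ultimately show ?thesis by blast
  next
    case 6
    define z :: "real ^ ('a + 'b)" where "z = mk (\<lambda>a. 3 / (2 * n1)) (\<lambda>b. real e2 / n2)"
    have s: "s1 z = 3 / 2" "s2 z = real e2" using n unfolding z_def by (simp_all add: n1_def[symmetric] n2_def[symmetric])
    have "fst p \<bullet> z = snd p" using 6 s by (simp add: inner_one2)
    moreover have "\<forall>q\<in>ineqs e1 e2. q \<noteq> p \<longrightarrow> fst q \<bullet> z < snd q"
    proof (rule others_lt)
      show "\<forall>k. (- axis k 1, 0) \<noteq> p \<longrightarrow> 0 < z $ k" using n ee
        by (auto simp: z_def mk_def axis_eq_axis split: sum.split)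
    qed (use ee ee2 6 in \<open>auto simp: s algebra_simps\<close>)
    ultimately show ?thesis by blast
  qed
qed

lemma witness_exists:
  assumes e: "e1 \<ge> 2" "e2 \<ge> 2" and c: "CARD('a::finite) \<ge> 2" "CARD('b::finite) \<ge> 2"
    and p: "p \<in> ineqs e1 e2"
  shows "\<exists>z :: real ^ ('a + 'b). \<not> fst p \<bullet> z \<le> snd p \<and> (\<forall>q\<in>ineqs e1 e2. q \<noteq> p \<longrightarrow> fst q \<bullet> z \<le> snd q)"
proof -
  define n1 where "n1 = real CARD('a)"
  define n2 where "n2 = real CARD('b)"
  have n: "n1 \<ge> 2" "n2 \<ge> 2" using c by (auto simp: n1_def n2_def)
  have ee: "real e1 \<ge> 2" "real e2 \<ge> 2" using e by auto
  have ee2: "real e1 * real e2 \<ge> 4" "real e1 * real e2 \<ge> 2 * real e1" "real e1 * real e2 \<ge> 2 * real e2"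
    using mult_mono[OF ee] ee by (auto simp: mult.commute mult_right_mono)
  have ee3a: "1 + real e1 \<le> real e1 * real e2" "1 + real e2 \<le> real e1 * real e2"
    using ee ee2 by linarith+
  have ee3: "1 + real e1 \<le> real e1 * real e2" "1 + real e2 \<le> real e1 * real e2"
    "1 + real e1 \<le> real e2 * real e1" "1 + real e2 \<le> real e2 * real e1"
    using ee3a by (simp_all add: ac_simps)
  from p show ?thesis
  proof (cases rule: ineqs_cases)
    case (1 a0)
    define z :: "real ^ ('a + 'b)" where "z = mk (\<lambda>a. if a = a0 then -1 else 2 / (n1 - 1)) (\<lambda>b. 1 / n2)"
    have s: "s1 z = 1" "s2 z = 1" using n unfolding z_def by (simp_all add: sum_if_eq n1_def[symmetric] n2_def[symmetric] field_simps)
    have "\<not> fst p \<bullet> z \<le> snd p" using 1 by (simp add: inner_axis' z_def)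
    moreover have "\<forall>q\<in>ineqs e1 e2. q \<noteq> p \<longrightarrow> fst q \<bullet> z \<le> snd q"
    proof (rule others_le)
      show "\<forall>k. (- axis k 1, 0) \<noteq> p \<longrightarrow> 0 \<le> z $ k" using 1 n
        by (auto simp: z_def mk_def axis_eq_axis split: sum.split)
    qed (use ee ee2 1 in \<open>auto simp: s algebra_simps\<close>)
    ultimately show ?thesis by blast
  next
    case (2 b0)
    define z :: "real ^ ('a + 'b)" where "z = mk (\<lambda>a. 1 / n1) (\<lambda>b. if b = b0 then -1 else 2 / (n2 - 1))"
    have s: "s1 z = 1" "s2 z = 1" using n unfolding z_def by (simp_all add: sum_if_eq n1_def[symmetric] n2_def[symmetric] field_simps)
    have "\<not> fst p \<bullet> z \<le> snd p" using 2 by (simp add: inner_axis' z_def)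
    moreover have "\<forall>q\<in>ineqs e1 e2. q \<noteq> p \<longrightarrow> fst q \<bullet> z \<le> snd q"
    proof (rule others_le)
      show "\<forall>k. (- axis k 1, 0) \<noteq> p \<longrightarrow> 0 \<le> z $ k" using 2 n
        by (auto simp: z_def mk_def axis_eq_axis split: sum.split)
    qed (use ee ee2 2 in \<open>auto simp: s algebra_simps\<close>)
    ultimately show ?thesis by blast
  next
    case 3
    define z :: "real ^ ('a + 'b)" where "z = mk (\<lambda>a. 1 / n1) (\<lambda>b. 0)"
    have s: "s1 z = 1" "s2 z = 0" using n unfolding z_def by (simp_all add: n1_def[symmetric] n2_def[symmetric])
    have "\<not> fst p \<bullet> z \<le> snd p" using 3 by (simp add: s inner_one1 inner_one2 inner_diff_left)
    moreover have "\<forall>q\<in>ineqs e1 e2. q \<noteq> p \<longrightarrow> fst q \<bullet> z \<le> snd q"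
    proof (rule others_le)
      show "\<forall>k. (- axis k 1, 0) \<noteq> p \<longrightarrow> 0 \<le> z $ k" using n ee
        by (auto simp: z_def mk_def split: sum.split)
    qed (use ee ee2 3 in \<open>auto simp: s algebra_simps\<close>)
    ultimately show ?thesis by blast
  next
    case 4
    define z :: "real ^ ('a + 'b)" where "z = mk (\<lambda>a. 0) (\<lambda>b. 1 / n2)"
    have s: "s1 z = 0" "s2 z = 1" using n unfolding z_def by (simp_all add: n1_def[symmetric] n2_def[symmetric])
    have "\<not> fst p \<bullet> z \<le> snd p" using 4 by (simp add: s inner_one1 inner_one2 inner_diff_left)
    moreover have "\<forall>q\<in>ineqs e1 e2. q \<noteq> p \<longrightarrow> fst q \<bullet> z \<le> snd q"
    proof (rule others_le)
      show "\<forall>k. (- axis k 1, 0) \<noteq> p \<longrightarrow> 0 \<le> z $ k" using n ee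
        by (auto simp: z_def mk_def split: sum.split)
    qed (use ee ee2 4 in \<open>auto simp: s algebra_simps\<close>)
    ultimately show ?thesis by blast
  next
    case 5
    define z :: "real ^ ('a + 'b)" where "z = mk (\<lambda>a. (real e1 + 1) / n1) (\<lambda>b. real e2 / n2)"
    have s: "s1 z = real e1 + 1" "s2 z = real e2" using n unfolding z_def by (simp_all add: n1_def[symmetric] n2_def[symmetric])
    have "\<not> fst p \<bullet> z \<le> snd p" using 5 by (simp add: s inner_one1)
    moreover have "\<forall>q\<in>ineqs e1 e2. q \<noteq> p \<longrightarrow> fst q \<bullet> z \<le> snd q"
    proof (rule others_le)
      show "\<forall>k. (- axis k 1, 0) \<noteq> p \<longrightarrow> 0 \<le> z $ k" using n ee
        by (auto simp: z_def mk_def split: sum.split)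
    qed (use ee ee2 5 in \<open>auto simp: s algebra_simps ee3\<close>)
    ultimately show ?thesis by blast
  next
    case 6
    define z :: "real ^ ('a + 'b)" where "z = mk (\<lambda>a. real e1 / n1) (\<lambda>b. (real e2 + 1) / n2)"
    have s: "s1 z = real e1" "s2 z = real e2 + 1" using n unfolding z_def by (simp_all add: n1_def[symmetric] n2_def[symmetric])
    have "\<not> fst p \<bullet> z \<le> snd p" using 6 by (simp add: s inner_one2)
    moreover have "\<forall>q\<in>ineqs e1 e2. q \<noteq> p \<longrightarrow> fst q \<bullet> z \<le> snd q"
    proof (rule others_le)
      show "\<forall>k. (- axis k 1, 0) \<noteq> p \<longrightarrow> 0 \<le> z $ k" using n ee
        by (auto simp: z_def mk_def split: sum.split)
    qed (use ee ee2 6 in \<open>auto simp: s algebra_simps ee3\<close>)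
    ultimately show ?thesis by blast
  qed
qed

theorem proposition4p2:
  fixes e1 e2 :: nat
  assumes "CARD('a::finite) \<ge> 2" and "CARD('b::finite) \<ge> 2"
    and "e1 \<ge> 2" and "e2 \<ge> 2"
  shows "aff_dim (PA e1 e2 :: (real ^ ('a + 'b)) set) = int (CARD('a) + CARD('b))
     \<and> card (ineqs e1 e2 :: ((real ^ ('a + 'b)) \<times> real) set) = CARD('a) + CARD('b) + 4
     \<and> (PA e1 e2 :: (real ^ ('a + 'b)) set) = {y. \<forall>(c, r) \<in> ineqs e1 e2. c \<bullet> y \<le> r}
     \<and> {F. F facet_of (PA e1 e2 :: (real ^ ('a + 'b)) set)}
         = (\<lambda>(c, r). PA e1 e2 \<inter> {y. c \<bullet> y = r}) ` ineqs e1 e2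
     \<and> card {F. F facet_of (PA e1 e2 :: (real ^ ('a + 'b)) set)} = CARD('a) + CARD('b) + 4"
proof -
  let ?S = "PA e1 e2 :: (real ^ ('a + 'b)) set"
  let ?I = "ineqs e1 e2 :: ((real ^ ('a + 'b)) \<times> real) set"
  define H where "H = (\<lambda>p :: (real ^ ('a + 'b)) \<times> real. {x. fst p \<bullet> x \<le> snd p})"
  define G where "G = (\<lambda>p :: (real ^ ('a + 'b)) \<times> real. ?S \<inter> {x. fst p \<bullet> x = snd p})"
  have ad: "aff_dim ?S = int (CARD('a) + CARD('b))" using aff_dim_PA assms by blast
  have ci: "card ?I = CARD('a) + CARD('b) + 4" using card_ineqs assms by blast
  have Seq: "?S = {y. \<forall>(c, r) \<in> ?I. c \<bullet> y \<le> r}" using PA_eq assms by blast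
  have fin: "finite ?I" unfolding ineqs_eq by simp
  have ah: "affine hull ?S = UNIV"
    using ad aff_dim_eq_full[where S="?S"] by simp
  have Sint: "?S = \<Inter>(H ` ?I)" unfolding Seq H_def by (auto simp: split_def)
  have wit: "\<And>p. p \<in> ?I \<Longrightarrow> \<exists>z. z \<notin> H p \<and> (\<forall>q\<in>?I. q \<noteq> p \<longrightarrow> z \<in> H q)"
    using witness_exists[OF assms(3,4,1,2)] unfolding H_def by auto
  have tig: "\<And>p. p \<in> ?I \<Longrightarrow> \<exists>z. z \<in> G p \<and> (\<forall>q\<in>?I. q \<noteq> p \<longrightarrow> z \<notin> G q)"
  proof -
    fix p assume p: "p \<in> ?I"
    obtain z where z: "fst p \<bullet> z = snd p" "\<forall>q\<in>?I. q \<noteq> p \<longrightarrow> fst q \<bullet> z < snd q"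
      using tight_exists[OF assms(3,4,1,2) p] by blast
    have "z \<in> ?S" unfolding Seq using z by (force simp: split_def)
    then show "\<exists>z. z \<in> G p \<and> (\<forall>q\<in>?I. q \<noteq> p \<longrightarrow> z \<notin> G q)"
      using z unfolding G_def by (intro exI[of _ z]) force
  qed
  have injH: "inj_on H ?I"
  proof (rule inj_onI, rule ccontr)
    fix p q assume pq: "p \<in> ?I" "q \<in> ?I" "H p = H q" "p \<noteq> q"
    obtain z where "z \<notin> H p" "\<forall>q'\<in>?I. q' \<noteq> p \<longrightarrow> z \<in> H q'" using wit[OF pq(1)] by blast
    then show False using pq by auto
  qed
  have nz: "fst p \<noteq> 0" if p: "p \<in> ?I" for p
  proof
    assume f: "fst p = 0"
    obtain z where "z \<notin> H p" using wit[OF p] by blast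
    then have "snd p < 0" using f unfolding H_def by (auto split: if_splits)
    moreover obtain z' where "z' \<in> G p" using tig[OF p] by blast
    ultimately show False using f unfolding G_def by simp
  qed
  define a where "a = (\<lambda>h. fst (inv_into ?I H h))"
  define b where "b = (\<lambda>h. snd (inv_into ?I H h))"
  have ab: "a (H p) = fst p" "b (H p) = snd p" if "p \<in> ?I" for p
    using inv_into_f_f[OF injH that] unfolding a_def b_def by simp_all
  have facet_iff: "C facet_of ?S \<longleftrightarrow> (\<exists>h. h \<in> H ` ?I \<and> C = ?S \<inter> {x. a h \<bullet> x = b h})" for C
  proof (rule facet_of_polyhedron_explicit)
    show "finite (H ` ?I)" using fin by simp
    show "?S = affine hull ?S \<inter> \<Inter>(H ` ?I)" using ah Sint by simp
    show "a h \<noteq> 0 \<and> h = {x. a h \<bullet> x \<le> b h}" if "h \<in> H ` ?I" for h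
      using that ab nz unfolding H_def by auto
    show "?S \<subset> affine hull ?S \<inter> \<Inter>F'" if F': "F' \<subset> H ` ?I" for F'
    proof -
      obtain h where h: "h \<in> H ` ?I" "h \<notin> F'" using F' by blast
      then obtain p where p: "p \<in> ?I" "h = H p" by blast
      obtain z where z: "z \<notin> H p" "\<forall>q\<in>?I. q \<noteq> p \<longrightarrow> z \<in> H q" using wit[OF p(1)] by blast
      have "z \<in> \<Inter>F'"
      proof
        fix h' assume "h' \<in> F'"
        then obtain q where "q \<in> ?I" "h' = H q" "q \<noteq> p" using F' h p by blast
        then show "z \<in> h'" using z by auto
      qed
      moreover have "z \<notin> ?S" using z p Sint by auto
      moreover have "?S \<subseteq> \<Inter>F'" using F' Sint by auto
      ultimately show ?thesis using ah by auto
    qed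
  qed
  have facets: "{F. F facet_of ?S} = (\<lambda>(c, r). ?S \<inter> {y. c \<bullet> y = r}) ` ?I"
  proof -
    have "{F. F facet_of ?S} = {C. \<exists>p\<in>?I. C = ?S \<inter> {x. fst p \<bullet> x = snd p}}"
      unfolding facet_iff using ab by auto
    also have "\<dots> = (\<lambda>(c, r). ?S \<inter> {y. c \<bullet> y = r}) ` ?I" by (auto simp: split_def)
    finally show ?thesis .
  qed
  have injG: "inj_on (\<lambda>(c, r). ?S \<inter> {y. c \<bullet> y = r}) ?I"
  proof (rule inj_onI, rule ccontr)
    fix p q assume pq: "p \<in> ?I" "q \<in> ?I" "(\<lambda>(c, r). ?S \<inter> {y. c \<bullet> y = r}) p = (\<lambda>(c, r). ?S \<inter> {y. c \<bullet> y = r}) q" "p \<noteq> q"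
    then have "G p = G q" unfolding G_def by (simp add: split_def)
    moreover obtain z where "z \<in> G p" "\<forall>q'\<in>?I. q' \<noteq> p \<longrightarrow> z \<notin> G q'" using tig[OF pq(1)] by blast
    ultimately show False using pq by auto
  qed
  have "card {F. F facet_of ?S} = CARD('a) + CARD('b) + 4"
    unfolding facets using card_image[OF injG] ci by simp
  then show ?thesis using ad ci Seq facets by blast
qed

end
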